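(* Let $S$ be a smooth cubic surface over a field $K$. Suppose $S$ contains a skew pair of $K$-lines $\ell,\ell'$, and let $P\in\ell(K)$ be such that $\Gamma_P$ is the union of $\ell$ and a conic that is irreducible over $K$. Then the point $\ell'\cap\Pi_P$ is not an Eckardt point.
   Context: A smooth cubic surface $S$ over $K$ is a nonsingular surface in $\mathbb{P}^3$ defined by a homogeneous cubic over $K$. A $K$-line is a line in $\mathbb{P}^3$ defined over $K$; lines "on $S$" are lines over $\overline{K}$ contained in $S$. A skew pair of lines is a pair of disjoint lines. An Eckardt point is a point of $S$ through which three of the lines on $S$ pass. For $P\in S(\overline{K})$, $\Pi_P$ is the tangent plane to $S$ at $P$ and $\Gamma_P=S\cap\Pi_P$ (a plane cubic curve). *)

theory Defs
  imports "HOL-Library.Numeral_Type" "HOL-Algebra.Algebraic_Closure_Type"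
begin

text \<open>Points of projective 3-space are represented by nonzero coordinate vectors
  of type 4 \<Rightarrow> 'a (homogeneous coordinates indexed by the 4-element type 4).
  Homogeneous forms of degree d in 4 variables are given by coefficient functions
  on exponent vectors e :: 4 \<Rightarrow> nat with total degree d.\<close>

definition monoms :: "nat \<Rightarrow> (4 \<Rightarrow> nat) set" where
  "monoms d = {e. sum e UNIV = d}"

definition form_eval :: "nat \<Rightarrow> ((4 \<Rightarrow> nat) \<Rightarrow> 'a::comm_ring_1) \<Rightarrow> (4 \<Rightarrow> 'a) \<Rightarrow> 'a" where
  "form_eval d c x = (\<Sum>e\<in>monoms d. c e * (\<Prod>i\<in>UNIV. x i ^ e i))"

definition form_deriv :: "nat \<Rightarrow> ((4 \<Rightarrow> nat) \<Rightarrow> 'a::comm_ring_1) \<Rightarrow> 4 \<Rightarrow> (4 \<Rightarrow> 'a) \<Rightarrow> 'a" where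
  "form_deriv d c i x =
     (\<Sum>e\<in>monoms d. of_nat (e i) * c e * (\<Prod>j\<in>UNIV. x j ^ ((e(i := e i - 1)) j)))"

definition lin_eval :: "(4 \<Rightarrow> 'a::comm_ring_1) \<Rightarrow> (4 \<Rightarrow> 'a) \<Rightarrow> 'a" where
  "lin_eval a x = (\<Sum>i\<in>UNIV. a i * x i)"

definition nonzero_vec :: "(4 \<Rightarrow> 'a::zero) \<Rightarrow> bool" where
  "nonzero_vec x \<longleftrightarrow> (\<exists>i. x i \<noteq> 0)"

text \<open>Base field K = 'k, algebraic closure = 'k alg_closure with embedding to_ac.\<close>

abbreviation lift_vec :: "(4 \<Rightarrow> 'k::field) \<Rightarrow> (4 \<Rightarrow> 'k alg_closure)" where
  "lift_vec v \<equiv> (\<lambda>i. to_ac (v i))"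

abbreviation lift_coeffs :: "((4 \<Rightarrow> nat) \<Rightarrow> 'k::field) \<Rightarrow> ((4 \<Rightarrow> nat) \<Rightarrow> 'k alg_closure)" where
  "lift_coeffs c \<equiv> (\<lambda>e. to_ac (c e))"

definition cubicF :: "((4 \<Rightarrow> nat) \<Rightarrow> 'k::field) \<Rightarrow> (4 \<Rightarrow> 'k alg_closure) \<Rightarrow> 'k alg_closure" where
  "cubicF c x = form_eval 3 (lift_coeffs c) x"

definition cubicF_deriv :: "((4 \<Rightarrow> nat) \<Rightarrow> 'k::field) \<Rightarrow> 4 \<Rightarrow> (4 \<Rightarrow> 'k alg_closure) \<Rightarrow> 'k alg_closure" where
  "cubicF_deriv c i x = form_deriv 3 (lift_coeffs c) i x"

definition smooth_cubic :: "((4 \<Rightarrow> nat) \<Rightarrow> 'k::field) \<Rightarrow> bool" where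
  "smooth_cubic c \<longleftrightarrow>
     \<not> (\<exists>x. nonzero_vec x \<and> cubicF c x = 0 \<and> (\<forall>i. cubicF_deriv c i x = 0))"

text \<open>Lines in P^3 (over the algebraic closure) as 2-dimensional subspaces.\<close>
definition lin_indep2 :: "(4 \<Rightarrow> 'a::field) \<Rightarrow> (4 \<Rightarrow> 'a) \<Rightarrow> bool" where
  "lin_indep2 u w \<longleftrightarrow> (\<forall>a b. (\<forall>i. a * u i + b * w i = 0) \<longrightarrow> a = 0 \<and> b = 0)"

definition span2 :: "(4 \<Rightarrow> 'a::field) \<Rightarrow> (4 \<Rightarrow> 'a) \<Rightarrow> (4 \<Rightarrow> 'a) set" where
  "span2 u w = {x. \<exists>a b. x = (\<lambda>i. a * u i + b * w i)}"

definition is_line :: "(4 \<Rightarrow> 'a::field) set \<Rightarrow> bool" where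
  "is_line M \<longleftrightarrow> (\<exists>u w. lin_indep2 u w \<and> M = span2 u w)"

definition K_line :: "(4 \<Rightarrow> 'k::field alg_closure) set \<Rightarrow> bool" where
  "K_line M \<longleftrightarrow> (\<exists>u w :: 4 \<Rightarrow> 'k. lin_indep2 (lift_vec u) (lift_vec w)
                                     \<and> M = span2 (lift_vec u) (lift_vec w))"

definition line_on :: "((4 \<Rightarrow> nat) \<Rightarrow> 'k::field) \<Rightarrow> (4 \<Rightarrow> 'k alg_closure) set \<Rightarrow> bool" where
  "line_on c M \<longleftrightarrow> is_line M \<and> (\<forall>x\<in>M. cubicF c x = 0)"

definition skew :: "(4 \<Rightarrow> 'a::field) set \<Rightarrow> (4 \<Rightarrow> 'a) set \<Rightarrow> bool" where
  "skew M N \<longleftrightarrow> (\<forall>x. x \<in> M \<and> x \<in> N \<longrightarrow> \<not> nonzero_vec x)"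

definition tangent_plane :: "((4 \<Rightarrow> nat) \<Rightarrow> 'k::field) \<Rightarrow> (4 \<Rightarrow> 'k alg_closure)
                              \<Rightarrow> (4 \<Rightarrow> 'k alg_closure) set" where
  "tangent_plane c P = {x. (\<Sum>i\<in>UNIV. cubicF_deriv c i P * x i) = 0}"

definition eckardt :: "((4 \<Rightarrow> nat) \<Rightarrow> 'k::field) \<Rightarrow> (4 \<Rightarrow> 'k alg_closure) \<Rightarrow> bool" where
  "eckardt c Q \<longleftrightarrow> nonzero_vec Q \<and> cubicF c Q = 0 \<and>
     (\<exists>L1 L2 L3. line_on c L1 \<and> line_on c L2 \<and> line_on c L3 \<and>
        L1 \<noteq> L2 \<and> L1 \<noteq> L3 \<and> L2 \<noteq> L3 \<and> Q \<in> L1 \<and> Q \<in> L2 \<and> Q \<in> L3)"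

text \<open>Gamma_P = S \<inter> Pi_P is the union of the line l and a conic irreducible over K:
  on the plane Pi_P, F = a * q with a K-linear form a cutting out l in Pi_P and a
  K-quadratic form q which is not identically zero on Pi_P and does not factor as
  a product of two K-linear forms on Pi_P.\<close>
definition gamma_line_plus_irred_conic ::
  "((4 \<Rightarrow> nat) \<Rightarrow> 'k::field) \<Rightarrow> (4 \<Rightarrow> 'k alg_closure) set \<Rightarrow> (4 \<Rightarrow> 'k) \<Rightarrow> bool" where
  "gamma_line_plus_irred_conic c l P \<longleftrightarrow>
     (let Pi = tangent_plane c (lift_vec P) in
      \<exists>(a :: 4 \<Rightarrow> 'k) (q :: (4 \<Rightarrow> nat) \<Rightarrow> 'k).
        (\<forall>x\<in>Pi. cubicF c x = lin_eval (lift_vec a) x * form_eval 2 (lift_coeffs q) x) \<and>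
        l = {x\<in>Pi. lin_eval (lift_vec a) x = 0} \<and>
        (\<exists>x\<in>Pi. form_eval 2 (lift_coeffs q) x \<noteq> 0) \<and>
        \<not> (\<exists>b b' :: 4 \<Rightarrow> 'k. \<forall>x\<in>Pi.
              form_eval 2 (lift_coeffs q) x = lin_eval (lift_vec b) x * lin_eval (lift_vec b') x))"

end

theory Submission
  imports Defs "HOL-Analysis.Cartesian_Space"
begin


lemma ex4: "x = (0::4) \<or> x = 1 \<or> x = 2 \<or> x = 3"
proof (induct x rule: bit0_induct)
  case (of_int z)
  hence "z = 0 \<or> z = 1 \<or> z = 2 \<or> z = 3" by auto
  thus ?case by auto
qed
lemma UNIV4: "(UNIV :: 4 set) = {0,1,2,3}"
  using ex4 by auto
lemma d4: "(0::4) \<noteq> 1" "(0::4) \<noteq> 2" "(0::4)\<noteq>3" "(1::4)\<noteq>2" "(1::4)\<noteq>3" "(2::4) \<noteq> 3"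
  by simp_all
lemma sum4: "(\<Sum>i\<in>UNIV. f i) = f (0::4) + f 1 + f 2 + f 3"
  unfolding UNIV4 by (simp add: add.assoc)
lemma prod4: "(\<Prod>i\<in>UNIV. f i) = f (0::4) * f 1 * f 2 * f 3"
  unfolding UNIV4 by (simp add: mult.assoc)
lemma nat4_split3:
  assumes "(a::nat)+b+c+d = 3"
  obtains "a=3" "b=0" "c=0" "d=0" | "a=0" "b=3" "c=0" "d=0" | "a=0" "b=0" "c=3" "d=0" | "a=0" "b=0" "c=0" "d=3"
  | "a=2" "b=1" "c=0" "d=0" | "a=2" "b=0" "c=1" "d=0" | "a=2" "b=0" "c=0" "d=1"
  | "a=1" "b=2" "c=0" "d=0" | "a=0" "b=2" "c=1" "d=0" | "a=0" "b=2" "c=0" "d=1"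
  | "a=1" "b=0" "c=2" "d=0" | "a=0" "b=1" "c=2" "d=0" | "a=0" "b=0" "c=2" "d=1"
  | "a=1" "b=0" "c=0" "d=2" | "a=0" "b=1" "c=0" "d=2" | "a=0" "b=0" "c=1" "d=2"
  | "a=1" "b=1" "c=1" "d=0" | "a=1" "b=1" "c=0" "d=1" | "a=1" "b=0" "c=1" "d=1" | "a=0" "b=1" "c=1" "d=1"
proof -
  have A: "a = 0 \<or> a = 1 \<or> a = 2 \<or> a = 3" using assms by arith
  have B: "b = 0 \<or> b = 1 \<or> b = 2 \<or> b = 3" using assms by arith
  have C: "c = 0 \<or> c = 1 \<or> c = 2 \<or> c = 3" using assms by arith
  have Dd: "d = 3 - a - b - c" using assms by arith
  from A B C show thesis using that assms unfolding Dd
    by (elim disjE) simp_all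
qed

lemma nat4_split2:
  assumes "(a::nat)+b+c+d = 2"
  obtains "a=2" "b=0" "c=0" "d=0" | "a=0" "b=2" "c=0" "d=0" | "a=0" "b=0" "c=2" "d=0" | "a=0" "b=0" "c=0" "d=2"
  | "a=1" "b=1" "c=0" "d=0" | "a=1" "b=0" "c=1" "d=0" | "a=1" "b=0" "c=0" "d=1"
  | "a=0" "b=1" "c=1" "d=0" | "a=0" "b=1" "c=0" "d=1" | "a=0" "b=0" "c=1" "d=1"
proof -
  have A: "a = 0 \<or> a = 1 \<or> a = 2" using assms by arith
  have B: "b = 0 \<or> b = 1 \<or> b = 2" using assms by arith
  have C: "c = 0 \<or> c = 1 \<or> c = 2" using assms by arith
  have Dd: "d = 2 - a - b - c" using assms by arith
  from A B C show thesis using that assms unfolding Dd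
    by (elim disjE) simp_all
qed

definition M :: "(4 \<Rightarrow> nat) \<Rightarrow> (4 \<Rightarrow> 'a::comm_ring_1) \<Rightarrow> 'a" where
  "M e x = (\<Prod>i\<in>UNIV. x i ^ e i)"
definition D :: "(4 \<Rightarrow> nat) \<Rightarrow> (4 \<Rightarrow> 'a::comm_ring_1) \<Rightarrow> (4 \<Rightarrow> 'a) \<Rightarrow> 'a" where
  "D e x v = (\<Sum>i\<in>UNIV. of_nat (e i) * (\<Prod>j\<in>UNIV. x j ^ ((e(i := e i - 1)) j)) * v i)"
definition lc :: "'a::comm_ring_1 \<Rightarrow> (4 \<Rightarrow> 'a) \<Rightarrow> 'a \<Rightarrow> (4 \<Rightarrow> 'a) \<Rightarrow> (4 \<Rightarrow> 'a)" where
  "lc s x t v = (\<lambda>i. s * x i + t * v i)"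
definition HM :: "(4 \<Rightarrow> nat) \<Rightarrow> (4 \<Rightarrow> 'a::comm_ring_1) \<Rightarrow> (4 \<Rightarrow> 'a) \<Rightarrow> 'a" where
  "HM e x v = M e (lc 1 x 1 v) - M e x - D e x v - M e v"

lemma M_expand: "M e x = x 0 ^ e 0 * x 1 ^ e 1 * x 2 ^ e 2 * x 3 ^ e 3"
  unfolding M_def prod4 ..
lemma D_expand: "D e x v =
   of_nat (e 0) * (x 0 ^ (e 0 - 1) * x 1 ^ e 1 * x 2 ^ e 2 * x 3 ^ e 3) * v 0 +
   of_nat (e 1) * (x 0 ^ e 0 * x 1 ^ (e 1 - 1) * x 2 ^ e 2 * x 3 ^ e 3) * v 1 +
   of_nat (e 2) * (x 0 ^ e 0 * x 1 ^ e 1 * x 2 ^ (e 2 - 1) * x 3 ^ e 3) * v 2 +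
   of_nat (e 3) * (x 0 ^ e 0 * x 1 ^ e 1 * x 2 ^ e 2 * x 3 ^ (e 3 - 1)) * v 3"
  unfolding D_def prod4 sum4 by simp

lemma mono_C1:
  fixes x v :: "4 \<Rightarrow> 'a::field"
  assumes "sum e UNIV = 3"
  shows "M e (lc s x t v) = s^3 * M e x + s^2*t * D e x v + s*t^2 * HM e x v + t^3 * M e v"
proof -
  have "e 0 + e 1 + e 2 + e 3 = 3" using assms by (simp add: sum4)
  thus ?thesis unfolding HM_def
    by (rule nat4_split3) (simp_all add: M_expand D_expand lc_def algebra_simps power2_eq_square power3_eq_cube)
qed

lemma mono_C2:
  fixes x u w :: "4 \<Rightarrow> 'a::field"
  assumes "sum e UNIV = 3"
  shows "HM e x (lc b u g w) = b^2 * HM e x u + b*g*(HM e x (lc 1 u 1 w) - HM e x u - HM e x w) + g^2 * HM e x w"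
proof -
  have "e 0 + e 1 + e 2 + e 3 = 3" using assms by (simp add: sum4)
  thus ?thesis unfolding HM_def
    by (rule nat4_split3) (simp_all add: M_expand D_expand lc_def algebra_simps power2_eq_square power3_eq_cube)
qed

lemma mono_C3:
  fixes x v :: "4 \<Rightarrow> 'a::field"
  assumes "sum e UNIV = 3"
  shows "HM e x (lc a x b v) = 3*a^2 * M e x + 2*a*b * D e x v + b^2 * HM e x v"
proof -
  have "e 0 + e 1 + e 2 + e 3 = 3" using assms by (simp add: sum4)
  thus ?thesis unfolding HM_def
    by (rule nat4_split3) (simp_all add: M_expand D_expand lc_def algebra_simps power2_eq_square power3_eq_cube)
qed

lemma mono_Q1:
  fixes x y :: "4 \<Rightarrow> 'a::field"
  assumes "sum e UNIV = 2"
  shows "M e (lc a x b y) = a^2 * M e x + a*b*(M e (lc 1 x 1 y) - M e x - M e y) + b^2 * M e y"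
proof -
  have "e 0 + e 1 + e 2 + e 3 = 2" using assms by (simp add: sum4)
  thus ?thesis
    by (rule nat4_split2) (simp_all add: M_expand lc_def algebra_simps power2_eq_square)
qed

lemma mono_Q2:
  fixes x u w :: "4 \<Rightarrow> 'a::field"
  assumes "sum e UNIV = 2"
  shows "M e (lc 1 x 1 (lc b u g w)) - M e x - M e (lc b u g w) =
     b * (M e (lc 1 x 1 u) - M e x - M e u) + g * (M e (lc 1 x 1 w) - M e x - M e w)"
proof -
  have "e 0 + e 1 + e 2 + e 3 = 2" using assms by (simp add: sum4)
  thus ?thesis
    by (rule nat4_split2) (simp_all add: M_expand lc_def algebra_simps power2_eq_square)
qed

definition gf :: "((4 \<Rightarrow> nat) \<Rightarrow> 'a::field) \<Rightarrow> (4 \<Rightarrow> 'a) \<Rightarrow> (4 \<Rightarrow> 'a) \<Rightarrow> 'a" where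
  "gf C x v = (\<Sum>i\<in>UNIV. form_deriv 3 C i x * v i)"
definition Hf :: "((4 \<Rightarrow> nat) \<Rightarrow> 'a::field) \<Rightarrow> (4 \<Rightarrow> 'a) \<Rightarrow> (4 \<Rightarrow> 'a) \<Rightarrow> 'a" where
  "Hf C x v = form_eval 3 C (lc 1 x 1 v) - form_eval 3 C x - gf C x v - form_eval 3 C v"
definition Bq :: "((4 \<Rightarrow> nat) \<Rightarrow> 'a::field) \<Rightarrow> (4 \<Rightarrow> 'a) \<Rightarrow> (4 \<Rightarrow> 'a) \<Rightarrow> 'a" where
  "Bq C x y = form_eval 2 C (lc 1 x 1 y) - form_eval 2 C x - form_eval 2 C y"

lemma fe_M: "form_eval d C x = (\<Sum>e\<in>monoms d. C e * M e x)"
  unfolding form_eval_def M_def ..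

lemma gf_D: "gf C x v = (\<Sum>e\<in>monoms 3. C e * D e x v)"
  unfolding gf_def form_deriv_def D_def
  by (simp add: sum_distrib_left sum_distrib_right sum.swap[of _ UNIV] mult_ac)


lemma Hf_HM: "Hf C x v = (\<Sum>e\<in>monoms 3. C e * HM e x v)"
  unfolding Hf_def HM_def fe_M gf_D
  by (simp add: sum_subtractf right_diff_distrib)

lemma F_lc: "form_eval 3 C (lc s x t v) =
  s^3 * form_eval 3 C x + s^2*t * gf C x v + s*t^2 * Hf C x v + t^3 * form_eval 3 C v"
proof -
  have "form_eval 3 C (lc s x t v) = (\<Sum>e\<in>monoms 3. C e * (s^3 * M e x + s^2*t * D e x v + s*t^2 * HM e x v + t^3 * M e v))"
    unfolding fe_M by (rule sum.cong) (auto simp: mono_C1 monoms_def)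
  thus ?thesis unfolding fe_M gf_D Hf_HM
    by (simp add: distrib_left sum.distrib sum_distrib_left mult_ac)
qed

lemma sum_lin3: "(\<Sum>e\<in>A. C e * (a1 * p1 e + a2 * p2 e + a3 * p3 e)) =
   a1 * (\<Sum>e\<in>A. C e * p1 e) + a2 * (\<Sum>e\<in>A. C e * p2 e) + a3 * (\<Sum>e\<in>A. C e * p3 e)"
  for C :: "_ \<Rightarrow> 'a::comm_ring_1"
  by (simp add: distrib_left sum.distrib sum_distrib_left mult.left_commute)
lemma sum_lin2: "(\<Sum>e\<in>A. C e * (a1 * p1 e + a2 * p2 e)) =
   a1 * (\<Sum>e\<in>A. C e * p1 e) + a2 * (\<Sum>e\<in>A. C e * p2 e)"
  for C :: "_ \<Rightarrow> 'a::comm_ring_1"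
  by (simp add: distrib_left sum.distrib sum_distrib_left mult.left_commute)

lemma H_lc: "Hf C x (lc b u g w) = b^2 * Hf C x u + b*g*(Hf C x (lc 1 u 1 w) - Hf C x u - Hf C x w) + g^2 * Hf C x w"
proof -
  have "Hf C x (lc b u g w) = (\<Sum>e\<in>monoms 3. C e * ((b^2 - b*g) * HM e x u + (b*g) * HM e x (lc 1 u 1 w) + (g^2 - b*g) * HM e x w))"
    unfolding Hf_HM
  proof (rule sum.cong[OF refl])
    fix e assume "e \<in> monoms 3" hence h: "sum e UNIV = 3" by (simp add: monoms_def)
    show "C e * HM e x (lc b u g w) = C e * ((b^2 - b*g) * HM e x u + (b*g) * HM e x (lc 1 u 1 w) + (g^2 - b*g) * HM e x w)"
      by (subst mono_C2[OF h]) (simp add: algebra_simps)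
  qed
  also have "\<dots> = (b^2 - b*g) * Hf C x u + (b*g) * Hf C x (lc 1 u 1 w) + (g^2 - b*g) * Hf C x w"
    unfolding sum_lin3 Hf_HM ..
  finally show ?thesis by (simp add: algebra_simps)
qed

lemma H_self: "Hf C x (lc a x b v) = 3*a^2 * form_eval 3 C x + 2*a*b * gf C x v + b^2 * Hf C x v"
proof -
  have "Hf C x (lc a x b v) = (\<Sum>e\<in>monoms 3. C e * ((3*a^2) * M e x + (2*a*b) * D e x v + b^2 * HM e x v))"
    unfolding Hf_HM by (rule sum.cong) (auto simp: mono_C3 monoms_def)
  also have "\<dots> = 3*a^2 * form_eval 3 C x + 2*a*b * gf C x v + b^2 * Hf C x v"
    unfolding sum_lin3 Hf_HM fe_M gf_D ..
  finally show ?thesis .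
qed

lemma g_lc: "gf C x (lc b u g w) = b * gf C x u + g * gf C x w"
  unfolding gf_def lc_def by (simp add: distrib_left sum.distrib sum_distrib_left mult.left_commute)

definition BM :: "(4 \<Rightarrow> nat) \<Rightarrow> (4 \<Rightarrow> 'a::comm_ring_1) \<Rightarrow> (4 \<Rightarrow> 'a) \<Rightarrow> 'a" where
  "BM e x y = M e (lc 1 x 1 y) - M e x - M e y"
lemma Bq_BM: "Bq C x y = (\<Sum>e\<in>monoms 2. C e * BM e x y)"
  unfolding Bq_def BM_def fe_M by (simp add: sum_subtractf right_diff_distrib)

lemma Q_lc: "form_eval 2 C (lc a x b y) = a^2 * form_eval 2 C x + a*b*Bq C x y + b^2 * form_eval 2 C y"
proof -
  have "form_eval 2 C (lc a x b y) = (\<Sum>e\<in>monoms 2. C e * (a^2 * M e x + (a*b) * BM e x y + b^2 * M e y))"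
    unfolding fe_M BM_def
  proof (rule sum.cong[OF refl])
    fix e assume "e \<in> monoms 2" hence h: "sum e UNIV = 2" by (simp add: monoms_def)
    show "C e * M e (lc a x b y) = C e * (a^2 * M e x + (a*b) * (M e (lc 1 x 1 y) - M e x - M e y) + b^2 * M e y)"
      by (subst mono_Q1[OF h]) (simp add: algebra_simps)
  qed
  also have "\<dots> = a^2 * form_eval 2 C x + a*b*Bq C x y + b^2 * form_eval 2 C y"
    unfolding sum_lin3 Bq_BM fe_M ..
  finally show ?thesis .
qed

lemma Bq_lc: "Bq C x (lc b u g w) = b * Bq C x u + g * Bq C x w"
proof -
  have "Bq C x (lc b u g w) = (\<Sum>e\<in>monoms 2. C e * (b * BM e x u + g * BM e x w))"
    unfolding Bq_BM BM_def by (rule sum.cong) (auto simp: mono_Q2 monoms_def)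
  also have "\<dots> = b * Bq C x u + g * Bq C x w"
    unfolding sum_lin2 Bq_BM ..
  finally show ?thesis .
qed

lemma Bq_sym: "Bq C x y = Bq C y x"
  unfolding Bq_def lc_def by (simp add: add.commute)



lemma four_dep:
  fixes d x1 x2 x3 x4 :: "4 \<Rightarrow> 'a::field"
  assumes dk: "d k \<noteq> 0" and h: "lin_eval d x1 = 0" "lin_eval d x2 = 0" "lin_eval d x3 = 0" "lin_eval d x4 = 0"
  shows "\<exists>a1 a2 a3 a4. (a1 \<noteq> 0 \<or> a2 \<noteq> 0 \<or> a3 \<noteq> 0 \<or> a4 \<noteq> 0) \<and>
           (\<forall>i. a1 * x1 i + a2 * x2 i + a3 * x3 i + a4 * x4 i = 0)"
proof (cases "x1 = x2 \<or> x1 = x3 \<or> x1 = x4 \<or> x2 = x3 \<or> x2 = x4 \<or> x3 = x4")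
  case True
  thus ?thesis
  proof (elim disjE)
    assume "x1 = x2" thus ?thesis by (intro exI[of _ 1] exI[of _ "-1"] exI[of _ 0]) simp
  next
    assume "x1 = x3" thus ?thesis by (intro exI[of _ 1] exI[of _ 0] exI[of _ "-1"] exI[of _ 0]) simp
  next
    assume "x1 = x4" thus ?thesis by (intro exI[of _ 1] exI[of _ 0] exI[of _ 0] exI[of _ "-1"]) simp
  next
    assume "x2 = x3" thus ?thesis by (intro exI[of _ 0] exI[of _ 1] exI[of _ "-1"] exI[of _ 0]) simp
  next
    assume "x2 = x4" thus ?thesis by (intro exI[of _ 0] exI[of _ 1] exI[of _ 0] exI[of _ "-1"]) simp
  next
    assume "x3 = x4" thus ?thesis by (intro exI[of _ 0] exI[of _ 0] exI[of _ 1] exI[of _ "-1"]) simp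
  qed
next
  case False
  define V :: "(4 \<Rightarrow> 'a) \<Rightarrow> 'a^4" where "V = (\<lambda>x. vec_lambda x)"
  have Vinj: "V x = V y \<longleftrightarrow> x = y" for x y unfolding V_def by (simp add: vec_lambda_inject)
  have Vnth: "V x $ i = x i" for x i unfolding V_def by simp
  define S where "S = {v::'a^4. (\<Sum>i\<in>UNIV. d i * v $ i) = 0}"
  have sub: "vec.subspace S"
    unfolding vec.subspace_def S_def
    by (simp add: distrib_left sum.distrib mult.left_commute flip: sum_distrib_left)
  have notS: "axis k 1 \<notin> S"
    unfolding S_def using dk by (simp add: axis_def if_distrib cong: if_cong)
  have "vec.span S \<subset> vec.span (UNIV :: ('a^4) set)"
  proof -
    have eq: "vec.span S = S" using sub by (rule vec.span_eq_iff[THEN iffD2])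
    show ?thesis unfolding eq vec.span_UNIV using notS by blast
  qed
  hence "vec.dim S < vec.dim (UNIV :: ('a^4) set)" by (rule vec.dim_psubset)
  hence dimS: "vec.dim S < 4" using vec_dim_card[where 'a='a and 'n=4] by simp
  define B where "B = {V x1, V x2, V x3, V x4}"
  have cardB: "card B = 4" using False unfolding B_def by (simp add: Vinj)
  have BS: "B \<subseteq> S" using h unfolding B_def S_def lin_eval_def by (simp add: Vnth)
  have "vec.dependent B"
  proof (rule ccontr)
    assume "\<not> vec.dependent B"
    from vec.independent_card_le_dim[OF BS this] cardB dimS show False by simp
  qed
  then obtain u where u: "\<exists>v\<in>B. u v \<noteq> 0" "(\<Sum>v\<in>B. u v *s v) = 0"
    using vec.dependent_finite[of B] unfolding B_def by auto
  have sumB: "(\<Sum>v\<in>B. u v *s v) = u (V x1) *s V x1 + u (V x2) *s V x2 + u (V x3) *s V x3 + u (V x4) *s V x4"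
    using False unfolding B_def by (simp add: Vinj add.assoc)
  show ?thesis
  proof (intro exI conjI allI)
    show "u (V x1) \<noteq> 0 \<or> u (V x2) \<noteq> 0 \<or> u (V x3) \<noteq> 0 \<or> u (V x4) \<noteq> 0"
      using u(1) unfolding B_def by auto
    fix i
    have "(\<Sum>v\<in>B. u v *s v) $ i = 0" using u(2) by simp
    thus "u (V x1) * x1 i + u (V x2) * x2 i + u (V x3) * x3 i + u (V x4) * x4 i = 0"
      unfolding sumB by (simp add: Vnth)
  qed
qed




lemma lin_lc: "lin_eval a (lc s x t v) = s * lin_eval a x + t * lin_eval a v"
  unfolding lin_eval_def lc_def by (simp add: distrib_left sum.distrib mult.left_commute flip: sum_distrib_left)

lemma alg_two: "\<exists>x::'a::alg_closed_field. x \<noteq> 0 \<and> x \<noteq> 1"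
proof -
  define f :: "nat \<Rightarrow> 'a" where "f = (\<lambda>i. if i = 0 then 1 else if i = 1 then -1 else 1)"
  have "\<exists>x. (\<Sum>k\<le>2. f k * x ^ k) = 0" by (rule alg_closed) (auto simp: f_def)
  then obtain x where "(\<Sum>k\<le>2. f k * x ^ k) = 0" by blast
  hence "1 - x + x^2 = 0" by (simp add: f_def numeral_2_eq_2)
  hence "x \<noteq> 0 \<and> x \<noteq> 1" by auto
  thus ?thesis by blast
qed

lemma CE:
  fixes a0 a1 a2 a3 b0 b1 b2 b3 :: "'a::alg_closed_field"
  assumes h: "\<And>s t. s^3*a0 + s^2*t*a1 + s*t^2*a2 + t^3*a3 = s^3*b0 + s^2*t*b1 + s*t^2*b2 + t^3*b3"
  shows "a0 = b0 \<and> a1 = b1 \<and> a2 = b2 \<and> a3 = b3"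
proof -
  obtain x :: 'a where x: "x \<noteq> 0" "x \<noteq> 1" using alg_two by blast
  have 0: "a0 = b0" using h[of 1 0] by simp
  have 3: "a3 = b3" using h[of 0 1] by simp
  have e1: "a1 + a2 = b1 + b2" using h[of 1 1] 0 3 by simp
  have "x * (a1 + x * a2) = x * (b1 + x * b2)" using h[of 1 x] 0 3 by (simp add: algebra_simps power2_eq_square power3_eq_cube)
  hence e2: "a1 + x * a2 = b1 + x * b2" using x by simp
  have "(x - 1) * (a2 - b2) = (a1 + x*a2) - (a1 + a2) - ((b1 + x*b2) - (b1 + b2))" by (simp add: algebra_simps)
  also have "\<dots> = 0" using e1 e2 by simp
  finally have "(x - 1) * (a2 - b2) = 0" .
  hence 2: "a2 = b2" using x by simp
  thus ?thesis using 0 3 e1 2 by simp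
qed

lemma span2_lc: "x \<in> span2 u w \<Longrightarrow> y \<in> span2 u w \<Longrightarrow> lc s x t y \<in> span2 u w"
proof -
  assume "x \<in> span2 u w" "y \<in> span2 u w"
  then obtain a b a' b' where "x = (\<lambda>i. a * u i + b * w i)" "y = (\<lambda>i. a' * u i + b' * w i)"
    unfolding span2_def by blast
  thus ?thesis unfolding span2_def lc_def
    by (intro CollectI exI[of _ "s*a + t*a'"] exI[of _ "s*b+t*b'"]) (simp add: fun_eq_iff algebra_simps)
qed

lemma span2_u: "u \<in> span2 u w" unfolding span2_def by (rule CollectI, rule exI[of _ 1], rule exI[of _ 0]) simp
lemma span2_w: "w \<in> span2 u w" unfolding span2_def by (rule CollectI, rule exI[of _ 0], rule exI[of _ 1]) simp

lemma span2_sub: "x \<in> span2 u w \<Longrightarrow> y \<in> span2 u w \<Longrightarrow> span2 x y \<subseteq> span2 u w"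
proof
  fix z assume "x \<in> span2 u w" "y \<in> span2 u w" "z \<in> span2 x y"
  then obtain a b where "z = lc a x b y" unfolding span2_def lc_def by blast
  thus "z \<in> span2 u w" using span2_lc \<open>x \<in> span2 u w\<close> \<open>y \<in> span2 u w\<close> by blast
qed

lemma line_through:
  fixes Q :: "4 \<Rightarrow> 'a::field"
  assumes "is_line L" "Q \<in> L" "nonzero_vec Q"
  shows "\<exists>v. lin_indep2 Q v \<and> L = span2 Q v"
proof -
  obtain u w where uw: "lin_indep2 u w" "L = span2 u w" using assms(1) unfolding is_line_def by blast
  obtain a b where Q: "Q = (\<lambda>i. a * u i + b * w i)" using assms(2) uw(2) unfolding span2_def by blast
  have ab: "a \<noteq> 0 \<or> b \<noteq> 0" using assms(3) Q unfolding nonzero_vec_def by auto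
  show ?thesis
  proof (cases "a \<noteq> 0")
    case True
    have ind: "lin_indep2 Q w" unfolding lin_indep2_def
    proof (intro allI impI)
      fix \<alpha> \<beta> assume h: "\<forall>i. \<alpha> * Q i + \<beta> * w i = 0"
      have "\<forall>i. (\<alpha>*a) * u i + (\<alpha>*b + \<beta>) * w i = 0" using h unfolding Q by (simp add: algebra_simps)
      hence "\<alpha>*a = 0 \<and> \<alpha>*b + \<beta> = 0" using uw(1) unfolding lin_indep2_def by blast
      thus "\<alpha> = 0 \<and> \<beta> = 0" using True by auto
    qed
    have "span2 Q w = span2 u w"
    proof
      show "span2 Q w \<subseteq> span2 u w" by (rule span2_sub) (use assms(2) uw(2) span2_w in auto)
      have "u = lc (1/a) Q (-b/a) w" unfolding Q lc_def using True by (simp add: fun_eq_iff field_simps)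
      hence "u \<in> span2 Q w" using span2_lc[OF span2_u span2_w] by metis
      thus "span2 u w \<subseteq> span2 Q w" by (rule span2_sub) (rule span2_w)
    qed
    thus ?thesis using ind uw(2) by auto
  next
    case False
    hence b: "b \<noteq> 0" using ab by simp
    have ind: "lin_indep2 Q u" unfolding lin_indep2_def
    proof (intro allI impI)
      fix \<alpha> \<beta> assume h: "\<forall>i. \<alpha> * Q i + \<beta> * u i = 0"
      have "\<forall>i. (\<alpha>*a + \<beta>) * u i + (\<alpha>*b) * w i = 0" using h unfolding Q by (simp add: algebra_simps)
      hence "\<alpha>*a + \<beta> = 0 \<and> \<alpha>*b = 0" using uw(1) unfolding lin_indep2_def by blast
      thus "\<alpha> = 0 \<and> \<beta> = 0" using b False by simp
    qed
    have "span2 Q u = span2 u w"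
    proof
      show "span2 Q u \<subseteq> span2 u w" by (rule span2_sub) (use assms(2) uw(2) span2_u in auto)
      have "w = lc (1/b) Q (-a/b) u" unfolding Q lc_def using b by (simp add: fun_eq_iff field_simps)
      hence "w \<in> span2 Q u" using span2_lc[OF span2_u span2_w] by metis
      thus "span2 u w \<subseteq> span2 Q u" by (rule span2_sub[OF span2_w])
    qed
    thus ?thesis using ind uw(2) by auto
  qed
qed




lemma span_eq_dep:
  fixes Q y1 y2 :: "4 \<Rightarrow> 'a::field"
  assumes i1: "lin_indep2 Q y1" and i2: "lin_indep2 Q y2"
    and h: "\<forall>i. a*Q i + b*y1 i + g*y2 i = 0" and nz: "a\<noteq>0 \<or> b\<noteq>0 \<or> g\<noteq>0"
  shows "span2 Q y1 = span2 Q y2"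
proof -
  have g: "g \<noteq> 0"
  proof
    assume "g = 0"
    hence "\<forall>i. a * Q i + b * y1 i = 0" using h by simp
    hence "a = 0 \<and> b = 0" using i1 unfolding lin_indep2_def by blast
    thus False using nz \<open>g = 0\<close> by simp
  qed
  have b: "b \<noteq> 0"
  proof
    assume "b = 0"
    hence "\<forall>i. a * Q i + g * y2 i = 0" using h by simp
    hence "a = 0 \<and> g = 0" using i2 unfolding lin_indep2_def by blast
    thus False using nz \<open>b = 0\<close> by simp
  qed
  have "y2 = lc (-a/g) Q (-b/g) y1" unfolding lc_def
  proof
    fix i have "a*Q i + b*y1 i + g*y2 i = 0" using h by blast
    hence e: "g * y2 i = -(a*Q i + b*y1 i)" by (metis neg_eq_iff_add_eq_0)
    have "y2 i = (g * y2 i) / g" using g by simp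
    also have "\<dots> = -a/g * Q i + -b/g * y1 i" unfolding e by (simp add: divide_simps)
    finally show "y2 i = -a/g * Q i + -b/g * y1 i" .
  qed
  hence y2: "y2 \<in> span2 Q y1" using span2_lc[OF span2_u span2_w] by metis
  have "y1 = lc (-a/b) Q (-g/b) y2" unfolding lc_def
  proof
    fix i have "a*Q i + b*y1 i + g*y2 i = 0" using h by blast
    hence "(a*Q i + g*y2 i) + b * y1 i = 0" by (simp add: add_ac)
    hence e: "b * y1 i = -(a*Q i + g*y2 i)" by (metis neg_eq_iff_add_eq_0)
    have "y1 i = (b * y1 i) / b" using b by simp
    also have "\<dots> = -a/b * Q i + -g/b * y2 i" unfolding e by (simp add: divide_simps)
    finally show "y1 i = -a/b * Q i + -g/b * y2 i" .
  qed
  hence y1: "y1 \<in> span2 Q y2" using span2_lc[OF span2_u span2_w] by metis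
  show ?thesis
    using span2_sub[OF span2_u y2] span2_sub[OF span2_u y1] by blast
qed

lemma meet:
  fixes d u w u' w' :: "4 \<Rightarrow> 'a::field"
  assumes dk: "d k \<noteq> 0" and i: "lin_indep2 u w" "lin_indep2 u' w'"
    and h: "lin_eval d u = 0" "lin_eval d w = 0" "lin_eval d u' = 0" "lin_eval d w' = 0"
  shows "\<not> skew (span2 u w) (span2 u' w')"
proof -
  obtain a1 a2 a3 a4 where nz: "a1 \<noteq> 0 \<or> a2 \<noteq> 0 \<or> a3 \<noteq> 0 \<or> a4 \<noteq> 0"
    and e: "\<forall>i. a1 * u i + a2 * w i + a3 * u' i + a4 * w' i = 0"
    using four_dep[OF dk h] by blast
  define x where "x = lc a1 u a2 w"
  have x1: "x \<in> span2 u w" unfolding x_def by (rule span2_lc[OF span2_u span2_w])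
  have "x = lc (-a3) u' (-a4) w'" unfolding x_def lc_def
  proof
    fix i have "a1 * u i + a2 * w i + a3 * u' i + a4 * w' i = 0" using e by blast
    thus "a1 * u i + a2 * w i = - a3 * u' i + - a4 * w' i" by (simp add: algebra_simps eq_neg_iff_add_eq_0)
  qed
  hence x2: "x \<in> span2 u' w'" using span2_lc[OF span2_u span2_w] by metis
  have "nonzero_vec x"
  proof (rule ccontr)
    assume "\<not> nonzero_vec x"
    hence z: "\<forall>i. a1 * u i + a2 * w i = 0" unfolding nonzero_vec_def x_def lc_def by simp
    hence "a1 = 0 \<and> a2 = 0" using i(1) unfolding lin_indep2_def by blast
    moreover have "\<forall>i. a3 * u' i + a4 * w' i = 0"
    proof
      fix i show "a3 * u' i + a4 * w' i = 0" using e z by (metis add.assoc add_0)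
    qed
    hence "a3 = 0 \<and> a4 = 0" using i(2) unfolding lin_indep2_def by blast
    ultimately show False using nz by simp
  qed
  thus ?thesis unfolding skew_def using x1 x2 by blast
qed

lemma line_coeffs:
  fixes C :: "(4 \<Rightarrow> nat) \<Rightarrow> 'a::alg_closed_field"
  assumes "\<And>s t. form_eval 3 C (lc s Q t v) = 0"
  shows "form_eval 3 C Q = 0 \<and> gf C Q v = 0 \<and> Hf C Q v = 0 \<and> form_eval 3 C v = 0"
proof -
  have "\<And>s t. s^3 * form_eval 3 C Q + s^2*t * gf C Q v + s*t^2 * Hf C Q v + t^3 * form_eval 3 C v
     = s^3 * 0 + s^2*t*0 + s*t^2*0 + t^3*0"
    using assms by (simp add: F_lc)
  from CE[OF this] show ?thesis by simp
qed

lemma fe_lift: "form_eval d (\<lambda>e. to_ac (c e)) (\<lambda>i. to_ac (x i)) = to_ac (form_eval d c x)"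
  unfolding form_eval_def by (simp add: to_ac_sum to_ac_prod)
lemma fd_lift: "form_deriv d (\<lambda>e. to_ac (c e)) i (\<lambda>i. to_ac (x i)) = to_ac (form_deriv d c i x)"
  unfolding form_deriv_def by (simp add: to_ac_sum to_ac_prod)
lemma lin_lift: "lin_eval (\<lambda>i. to_ac (a i)) (\<lambda>i. to_ac (x i)) = to_ac (lin_eval a x)"
  unfolding lin_eval_def by (simp add: to_ac_sum)
lemma Bq_lift: "Bq (\<lambda>e. to_ac (c e)) (\<lambda>i. to_ac (x i)) (\<lambda>i. to_ac (y i)) = to_ac (Bq c x y)"
proof -
  have "lc 1 (\<lambda>i. to_ac (x i)) 1 (\<lambda>i. to_ac (y i)) = (\<lambda>i. to_ac (lc 1 x 1 y i))"
    unfolding lc_def by simp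
  thus ?thesis unfolding Bq_def by (simp add: fe_lift)
qed

definition unitv :: "4 \<Rightarrow> 4 \<Rightarrow> 'a::comm_ring_1" where
  "unitv i = (\<lambda>j. if j = i then 1 else 0)"

lemma unitv_lift: "(\<lambda>j. to_ac (unitv i j)) = unitv i"
  unfolding unitv_def by (simp add: fun_eq_iff)

lemma vec_decomp: "v = lc (v 0) (unitv 0) 1 (lc (v 1) (unitv 1) 1 (lc (v 2) (unitv 2) (v 3) (unitv 3)))"
  unfolding lc_def unitv_def
proof
  fix j :: 4
  from ex4[of j] show "v j = v 0 * (if j = 0 then 1 else 0) + 1 * (v 1 * (if j = 1 then 1 else 0) +
      1 * (v 2 * (if j = 2 then 1 else 0) + v 3 * (if j = 3 then 1 else 0)))"
    by (elim disjE) simp_all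
qed

lemma Bq_coord: "Bq C x v = (\<Sum>i\<in>UNIV. v i * Bq C x (unitv i))"
proof -
  have "Bq C x v = Bq C x (lc (v 0) (unitv 0) 1 (lc (v 1) (unitv 1) 1 (lc (v 2) (unitv 2) (v 3) (unitv 3))))"
    by (subst vec_decomp[of v]) (rule refl)
  also have "\<dots> = v 0 * Bq C x (unitv 0) + (v 1 * Bq C x (unitv 1) + (v 2 * Bq C x (unitv 2) + v 3 * Bq C x (unitv 3)))"
    by (simp only: Bq_lc mult_1)
  finally show ?thesis unfolding sum4 by (simp add: add.assoc)
qed

lemma lin_coord: "lin_eval a v = (\<Sum>i\<in>UNIV. v i * a i)"
  unfolding lin_eval_def by (simp add: mult.commute)

lemma Bq_self: "Bq C x x = 2 * form_eval 2 C x"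
proof -
  have e: "lc 1 x 1 x = lc 2 x 0 x" unfolding lc_def by (simp add: fun_eq_iff)
  have "form_eval 2 C (lc 1 x 1 x) = form_eval 2 C x + Bq C x x + form_eval 2 C x"
    using Q_lc[of C 1 x 1 x] by simp
  moreover have "form_eval 2 C (lc 2 x 0 x) = 4 * form_eval 2 C x"
    using Q_lc[of C 2 x 0 x] by simp
  ultimately show ?thesis unfolding e by (simp add: algebra_simps)
qed

lemma Bq_scale: "Bq C x (lc k y 0 z) = k * Bq C x y"
  by (simp add: Bq_lc)




lemma LOS:
  fixes c :: "(4 \<Rightarrow> nat) \<Rightarrow> 'k::field"
  assumes "line_on c L" "Q \<in> L" "v \<in> L"
  shows "form_eval 3 (\<lambda>e. to_ac (c e)) Q = 0 \<and> gf (\<lambda>e. to_ac (c e)) Q v = 0 \<and>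
         Hf (\<lambda>e. to_ac (c e)) Q v = 0 \<and> form_eval 3 (\<lambda>e. to_ac (c e)) v = 0"
proof (rule line_coeffs)
  fix s t :: "'k alg_closure"
  obtain u w where L: "L = span2 u w" using assms(1) unfolding line_on_def is_line_def by blast
  have "lc s Q t v \<in> L" using assms(2,3) unfolding L by (rule span2_lc)
  thus "form_eval 3 (\<lambda>e. to_ac (c e)) (lc s Q t v) = 0"
    using assms(1) unfolding line_on_def cubicF_def by blast
qed

lemma gf_lin: "gf (\<lambda>e. to_ac (c e)) x v = lin_eval (\<lambda>i. cubicF_deriv c i x) v"
  unfolding gf_def lin_eval_def cubicF_deriv_def ..

lemma lin_comb4: "lin_eval a (\<lambda>i. a0 * x0 i + a1 * x1 i + a2 * x2 i + a3 * x3 i) =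
   a0 * lin_eval a x0 + a1 * lin_eval a x1 + a2 * lin_eval a x2 + a3 * lin_eval a x3"
  unfolding lin_eval_def by (simp add: distrib_left sum.distrib mult.left_commute flip: sum_distrib_left)

lemma smooth_pt:
  assumes "smooth_cubic c" "nonzero_vec x" "cubicF c x = 0"
  shows "\<exists>k. cubicF_deriv c k x \<noteq> 0"
  using assms unfolding smooth_cubic_def by blast

lemma unit_eval: "lin_eval d (unitv j) = d j"
proof -
  have "lin_eval d (unitv j) = (\<Sum>i\<in>UNIV. if i = j then d i else 0)"
    unfolding lin_eval_def unitv_def by (rule sum.cong) auto
  thus ?thesis by simp
qed

lemma unit_sum: "lin_eval d (\<lambda>m. a * unitv j m - b * unitv k m) = a * d j - b * d k"
proof -
  have "(\<lambda>m. a * unitv j m - b * unitv k m) = lc a (unitv j) (-b) (unitv k)"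
    unfolding lc_def by simp
  thus ?thesis by (simp add: lin_lc unit_eval)
qed

lemma pivot_decomp:
  fixes lL x0 dL :: "4 \<Rightarrow> 'a::field"
  assumes "lin_eval dL x0 = 0"
  shows "(\<Sum>j\<in>UNIV. x0 j * lin_eval lL (\<lambda>m. dL k * unitv j m - dL j * unitv k m)) = dL k * lin_eval lL x0"
proof -
  have "(\<Sum>j\<in>UNIV. x0 j * lin_eval lL (\<lambda>m. dL k * unitv j m - dL j * unitv k m))
     = (\<Sum>j\<in>UNIV. dL k * (lL j * x0 j) - lL k * (dL j * x0 j))"
    unfolding unit_sum by (rule sum.cong) (simp_all add: algebra_simps)
  also have "\<dots> = dL k * lin_eval lL x0 - lL k * lin_eval dL x0"
    unfolding lin_eval_def by (simp add: sum_subtractf sum_distrib_left)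
  finally show ?thesis using assms by simp
qed




theorem mainTheorem7:
  fixes c :: "(4 \<Rightarrow> nat) \<Rightarrow> 'k::field"
    and l l' :: "(4 \<Rightarrow> 'k alg_closure) set"
    and P :: "4 \<Rightarrow> 'k"
  assumes "smooth_cubic c"
    and "K_line l" and "line_on c l"
    and "K_line l'" and "line_on c l'"
    and "skew l l'"
    and "nonzero_vec P" and "lift_vec P \<in> l"
    and "gamma_line_plus_irred_conic c l P"
  shows "\<forall>Q. Q \<in> l' \<and> Q \<in> tangent_plane c (lift_vec P) \<and> nonzero_vec Q \<longrightarrow> \<not> eckardt c Q"
proof (intro allI impI notI)
  fix Q :: "4 \<Rightarrow> 'k alg_closure"
  assume HQ: "Q \<in> l' \<and> Q \<in> tangent_plane c (lift_vec P) \<and> nonzero_vec Q" and eck: "eckardt c Q"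
  note smooth = assms(1) and skew = assms(6)
  define C where "C = (\<lambda>e. to_ac (c e))"
  have F_def': "\<And>x. cubicF c x = form_eval 3 C x" unfolding cubicF_def C_def ..
  define TP where "TP = tangent_plane c (lift_vec P)"
  obtain U W :: "4 \<Rightarrow> 'k" where UW: "lin_indep2 (lift_vec U) (lift_vec W)" "l = span2 (lift_vec U) (lift_vec W)"
    using assms(2) unfolding K_line_def by blast
  obtain U' W' :: "4 \<Rightarrow> 'k" where UW': "lin_indep2 (lift_vec U') (lift_vec W')" "l' = span2 (lift_vec U') (lift_vec W')"
    using assms(4) unfolding K_line_def by blast
  obtain a :: "4 \<Rightarrow> 'k" and q :: "(4 \<Rightarrow> nat) \<Rightarrow> 'k" where
    G1: "\<forall>x\<in>TP. cubicF c x = lin_eval (lift_vec a) x * form_eval 2 (lift_coeffs q) x" and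
    G2: "l = {x\<in>TP. lin_eval (lift_vec a) x = 0}" and
    G4: "\<not> (\<exists>b b' :: 4 \<Rightarrow> 'k. \<forall>x\<in>TP.
              form_eval 2 (lift_coeffs q) x = lin_eval (lift_vec b) x * lin_eval (lift_vec b') x)"
    using assms(9) unfolding gamma_line_plus_irred_conic_def Let_def TP_def by blast
  define A where "A = (\<lambda>x. lin_eval (lift_vec a) x)"
  define CQ where "CQ = (\<lambda>e. to_ac (q e))"
  define qq where "qq = (\<lambda>x. form_eval 2 CQ x)"
  define BB where "BB = Bq CQ"
  have G1': "\<And>x. x \<in> TP \<Longrightarrow> form_eval 3 C x = A x * qq x"
    using G1 unfolding A_def qq_def CQ_def F_def' by blast
  define dK where "dK = (\<lambda>i. form_deriv 3 c i P)"
  define dL where "dL = (\<lambda>i. to_ac (dK i))"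
  have TP_eq: "\<And>x. x \<in> TP \<longleftrightarrow> lin_eval dL x = 0"
    unfolding TP_def tangent_plane_def dL_def dK_def lin_eval_def cubicF_deriv_def by (simp add: fd_lift)
  have lTP: "l \<subseteq> TP" using G2 by blast
  have FP: "cubicF c (lift_vec P) = 0" using assms(3,8) unfolding line_on_def by blast
  have nzP: "nonzero_vec (lift_vec P)" using assms(7) unfolding nonzero_vec_def by simp
  obtain k where dk: "dL k \<noteq> 0"
  proof -
    obtain k where "cubicF_deriv c k (lift_vec P) \<noteq> 0" using smooth_pt[OF smooth nzP FP] by blast
    hence "dL k \<noteq> 0" unfolding dL_def dK_def cubicF_deriv_def by (simp add: fd_lift)
    thus thesis using that by blast
  qed
  have Ql': "Q \<in> l'" and QTP: "Q \<in> TP" and nzQ: "nonzero_vec Q" using HQ unfolding TP_def by auto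
  have FQ: "form_eval 3 C Q = 0" using LOS[OF assms(5) Ql' Ql'] unfolding C_def by blast
  have AQ: "A Q \<noteq> 0"
  proof
    assume "A Q = 0"
    hence "Q \<in> l" using G2 QTP unfolding A_def by blast
    thus False using skew Ql' nzQ unfolding skew_def by blast
  qed
  have qQ: "qq Q = 0" using G1'[OF QTP] FQ AQ by simp
  define dQ where "dQ = (\<lambda>i. cubicF_deriv c i Q)"
  have gQ: "\<And>v. gf C Q v = lin_eval dQ v" unfolding C_def dQ_def by (rule gf_lin)
  obtain k' where dk': "dQ k' \<noteq> 0"
    using smooth_pt[OF smooth nzQ] FQ unfolding dQ_def F_def' by blast
  have expQ: "gf C Q x = A Q * BB Q x \<and> Hf C Q x = A Q * qq x + A x * BB Q x"
    if "x \<in> TP" for x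
  proof -
    have "\<And>s t. s^3 * form_eval 3 C Q + s^2*t * gf C Q x + s*t^2 * Hf C Q x + t^3 * form_eval 3 C x
       = s^3 * (A Q * qq Q) + s^2*t * (A Q * BB Q x + A x * qq Q) + s*t^2 * (A Q * qq x + A x * BB Q x) + t^3 * (A x * qq x)"
    proof -
      fix s t
      have "lc s Q t x \<in> TP" using QTP that unfolding TP_eq by (simp add: lin_lc)
      hence "form_eval 3 C (lc s Q t x) = A (lc s Q t x) * qq (lc s Q t x)" by (rule G1')
      also have "\<dots> = (s * A Q + t * A x) * (s^2 * qq Q + s*t*BB Q x + t^2 * qq x)"
        unfolding A_def qq_def BB_def by (simp add: lin_lc Q_lc)
      also have "\<dots> = s^3 * (A Q * qq Q) + s^2*t * (A Q * BB Q x + A x * qq Q) + s*t^2 * (A Q * qq x + A x * BB Q x) + t^3 * (A x * qq x)"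
        by (simp add: algebra_simps power2_eq_square power3_eq_cube)
      finally show "?thesis s t" by (simp add: F_lc)
    qed
    from CE[OF this] show ?thesis using qQ by simp
  qed
  obtain L1 L2 L3 where L: "line_on c L1" "line_on c L2" "line_on c L3"
    "L1 \<noteq> L2" "L1 \<noteq> L3" "L2 \<noteq> L3" "Q \<in> L1" "Q \<in> L2" "Q \<in> L3"
    using eck unfolding eckardt_def by blast
  have lineY: "\<exists>y. lin_indep2 Q y \<and> Lj = span2 Q y \<and> gf C Q y = 0 \<and> Hf C Q y = 0 \<and> gf C Q Q = 0"
    if Lj1: "line_on c Lj" and Lj2: "Q \<in> Lj" for Lj
  proof -
    obtain y where y: "lin_indep2 Q y" "Lj = span2 Q y"
      using line_through[of Lj Q] Lj1 Lj2 nzQ unfolding line_on_def by blast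
    have "y \<in> Lj" using y(2) span2_w by blast
    from LOS[OF Lj1 Lj2 this] LOS[OF Lj1 Lj2 Lj2] y show ?thesis
      unfolding C_def by blast
  qed
  obtain y1 where y1: "lin_indep2 Q y1" "L1 = span2 Q y1" "gf C Q y1 = 0" "Hf C Q y1 = 0" and gQQ: "gf C Q Q = 0"
    using lineY[OF L(1) L(7)] by blast
  obtain y2 where y2: "lin_indep2 Q y2" "L2 = span2 Q y2" "gf C Q y2 = 0" "Hf C Q y2 = 0"
    using lineY[OF L(2) L(8)] by blast
  obtain y3 where y3: "lin_indep2 Q y3" "L3 = span2 Q y3" "gf C Q y3 = 0" "Hf C Q y3 = 0"
    using lineY[OF L(3) L(9)] by blast
  have ind3: "\<And>\<alpha> \<beta> \<gamma>. (\<forall>i. \<alpha> * Q i + \<beta> * y1 i + \<gamma> * y2 i = 0) \<Longrightarrow> \<alpha> = 0 \<and> \<beta> = 0 \<and> \<gamma> = 0"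
  proof (rule ccontr)
    fix \<alpha> \<beta> \<gamma> assume h: "\<forall>i. \<alpha> * Q i + \<beta> * y1 i + \<gamma> * y2 i = 0" "\<not> (\<alpha> = 0 \<and> \<beta> = 0 \<and> \<gamma> = 0)"
    have "span2 Q y1 = span2 Q y2" by (rule span_eq_dep[OF y1(1) y2(1) h(1)]) (use h(2) in auto)
    thus False using L(4) y1(2) y2(2) by simp
  qed
  obtain a0 a1 a2 a3 where nz: "a0 \<noteq> 0 \<or> a1 \<noteq> 0 \<or> a2 \<noteq> 0 \<or> a3 \<noteq> 0"
    and dep: "\<forall>i. a0 * Q i + a1 * y1 i + a2 * y2 i + a3 * y3 i = 0"
    using four_dep[of dQ k' Q y1 y2 y3] dk' gQQ y1(3) y2(3) y3(3) unfolding gQ by blast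
  have a3: "a3 \<noteq> 0"
  proof
    assume "a3 = 0"
    hence "\<forall>i. a0 * Q i + a1 * y1 i + a2 * y2 i = 0" using dep by simp
    thus False using ind3 nz \<open>a3 = 0\<close> by blast
  qed
  define \<alpha> where "\<alpha> = -a0/a3"
  define \<beta> where "\<beta> = -a1/a3"
  define \<gamma> where "\<gamma> = -a2/a3"
  have y3e: "y3 i = \<alpha> * Q i + \<beta> * y1 i + \<gamma> * y2 i" for i
  proof -
    have "a0 * Q i + a1 * y1 i + a2 * y2 i + a3 * y3 i = 0" using dep by blast
    hence e: "a3 * y3 i = -(a0 * Q i + a1 * y1 i + a2 * y2 i)" by (metis neg_eq_iff_add_eq_0)
    have "y3 i = (a3 * y3 i) / a3" using a3 by simp
    also have "\<dots> = \<alpha> * Q i + \<beta> * y1 i + \<gamma> * y2 i" unfolding e \<alpha>_def \<beta>_def \<gamma>_def by (simp add: divide_simps)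
    finally show ?thesis .
  qed
  have \<gamma>: "\<gamma> \<noteq> 0"
  proof
    assume "\<gamma> = 0"
    hence "\<forall>i. \<alpha> * Q i + \<beta> * y1 i + (-1) * y3 i = 0" using y3e by simp
    hence "span2 Q y1 = span2 Q y3" by (rule span_eq_dep[OF y1(1) y3(1)]) simp
    thus False using L(5) y1(2) y3(2) by simp
  qed
  have \<beta>: "\<beta> \<noteq> 0"
  proof
    assume "\<beta> = 0"
    hence "\<forall>i. \<alpha> * Q i + \<gamma> * y2 i + (-1) * y3 i = 0" using y3e by simp
    hence "span2 Q y2 = span2 Q y3" by (rule span_eq_dep[OF y2(1) y3(1)]) simp
    thus False using L(6) y2(2) y3(2) by simp
  qed
  define u where "u = lc \<beta> y1 \<gamma> y2"
  have y3u: "y3 = lc \<alpha> Q 1 u" unfolding u_def lc_def using y3e by (simp add: fun_eq_iff algebra_simps)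
  have gu: "gf C Q u = 0" unfolding u_def g_lc using y1(3) y2(3) by simp
  have "Hf C Q y3 = Hf C Q u" unfolding y3u H_self using FQ gu by simp
  also have "\<dots> = \<beta> * \<gamma> * (Hf C Q (lc 1 y1 1 y2) - Hf C Q y1 - Hf C Q y2)"
    unfolding u_def by (subst H_lc) (simp add: y1(4) y2(4))
  finally have B12: "Hf C Q (lc 1 y1 1 y2) - Hf C Q y1 - Hf C Q y2 = 0"
    using y3(4) \<beta> \<gamma> by simp
  have Hzero: "\<And>b g. Hf C Q (lc b y1 g y2) = 0"
    by (subst H_lc) (use B12 y1(4) y2(4) in simp)
  obtain bw gw where bg: "bw \<noteq> 0 \<or> gw \<noteq> 0" "lin_eval dL (lc bw y1 gw y2) = 0"
  proof (cases "lin_eval dL y1 = 0")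
    case True thus thesis using that[of 1 0] by (simp add: lin_lc)
  next
    case False thus thesis using that[of "lin_eval dL y2" "- lin_eval dL y1"] by (simp add: lin_lc)
  qed
  define w where "w = lc bw y1 gw y2"
  have wTP: "w \<in> TP" unfolding TP_eq w_def by (rule bg(2))
  have gw0: "gf C Q w = 0" unfolding w_def g_lc using y1(3) y2(3) by simp
  have Hw0: "Hf C Q w = 0" unfolding w_def by (rule Hzero)
  have indw: "lin_indep2 Q w" unfolding lin_indep2_def
  proof (intro allI impI)
    fix x y assume h: "\<forall>i. x * Q i + y * w i = 0"
    have "\<forall>i. x * Q i + (y*bw) * y1 i + (y*gw) * y2 i = 0" using h unfolding w_def lc_def by (simp add: algebra_simps)
    hence "x = 0 \<and> y*bw = 0 \<and> y*gw = 0" by (rule ind3)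
    thus "x = 0 \<and> y = 0" using bg(1) by auto
  qed
  have BQw: "BB Q w = 0" using expQ[OF wTP] gw0 AQ by simp
  have qw: "qq w = 0" using expQ[OF wTP] Hw0 AQ BQw by simp
  have qspan: "\<And>s t. qq (lc s Q t w) = 0"
    unfolding qq_def Q_lc using qQ qw BQw unfolding qq_def BB_def by simp
  \<comment> \<open>K-rationality of Q\<close>
  obtain \<alpha>' \<beta>' where Qab: "Q = (\<lambda>i. \<alpha>' * to_ac (U' i) + \<beta>' * to_ac (W' i))"
    using Ql' UW'(2) unfolding span2_def by blast
  define lamK where "lamK = lin_eval dK U'"
  define muK where "muK = lin_eval dK W'"
  have U'TP: "lin_eval dL (lift_vec U') = to_ac lamK" unfolding dL_def lamK_def by (rule lin_lift)
  have W'TP: "lin_eval dL (lift_vec W') = to_ac muK" unfolding dL_def muK_def by (rule lin_lift)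
  have Qlc: "Q = lc \<alpha>' (lift_vec U') \<beta>' (lift_vec W')" unfolding Qab lc_def ..
  have lamu: "\<alpha>' * to_ac lamK + \<beta>' * to_ac muK = 0"
    using QTP unfolding TP_eq Qlc lin_lc U'TP W'TP .
  have UTP: "lin_eval dL (lift_vec U) = 0" "lin_eval dL (lift_vec W) = 0"
    using lTP UW(2) span2_u span2_w TP_eq by blast+
  have nzlm: "lamK \<noteq> 0 \<or> muK \<noteq> 0"
  proof (rule ccontr)
    assume "\<not> (lamK \<noteq> 0 \<or> muK \<noteq> 0)"
    hence "lin_eval dL (lift_vec U') = 0" "lin_eval dL (lift_vec W') = 0" using U'TP W'TP by simp_all
    from meet[OF dk UW(1) UW'(1) UTP this] show False using skew UW(2) UW'(2) by simp
  qed
  define Q0 where "Q0 = (\<lambda>i. muK * U' i - lamK * W' i)"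
  define \<kappa> where "\<kappa> = (if muK \<noteq> 0 then \<alpha>' / to_ac muK else - \<beta>' / to_ac lamK)"
  define Q0L where "Q0L = lift_vec Q0"
  have Qk: "Q = lc \<kappa> Q0L 0 Q0L"
  proof (cases "muK \<noteq> 0")
    case True
    have e: "\<And>x. \<alpha>' * (to_ac lamK * x) + \<beta>' * (to_ac muK * x) = 0"
    proof -
      fix x
      have "\<alpha>' * (to_ac lamK * x) + \<beta>' * (to_ac muK * x) = (\<alpha>' * to_ac lamK + \<beta>' * to_ac muK) * x"
        by (simp add: algebra_simps)
      thus "\<alpha>' * (to_ac lamK * x) + \<beta>' * (to_ac muK * x) = 0" using lamu by simp
    qed
    show ?thesis using True unfolding Qab lc_def \<kappa>_def Q0L_def Q0_def
      apply (simp add: fun_eq_iff field_simps)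
      using e by blast
  next
    case False
    hence l0: "lamK \<noteq> 0" using nzlm by simp
    hence "\<alpha>' = 0" using lamu False by simp
    thus ?thesis using False l0 unfolding Qab lc_def \<kappa>_def Q0L_def Q0_def by (simp add: fun_eq_iff field_simps)
  qed
  have \<kappa>0: "\<kappa> \<noteq> 0"
  proof
    assume "\<kappa> = 0" hence "\<not> nonzero_vec Q" unfolding Qk lc_def nonzero_vec_def by simp
    thus False using nzQ by simp
  qed
  define lK where "lK = (\<lambda>i. Bq q Q0 (unitv i))"
  define lL where "lL = lift_vec lK"
  define ell where "ell = (\<lambda>x. lin_eval lL x)"
  have ell_eq: "ell x = BB Q0L x" for x
  proof -
    have "BB Q0L x = (\<Sum>i\<in>UNIV. x i * BB Q0L (unitv i))" unfolding BB_def by (rule Bq_coord)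
    also have "\<dots> = (\<Sum>i\<in>UNIV. x i * lL i)"
    proof (rule sum.cong[OF refl])
      fix i
      have "BB Q0L (unitv i) = Bq CQ (lift_vec Q0) (\<lambda>j. to_ac (unitv i j))"
        unfolding BB_def Q0L_def unitv_lift ..
      also have "\<dots> = lL i" unfolding CQ_def Bq_lift lL_def lK_def ..
      finally show "x i * BB Q0L (unitv i) = x i * lL i" by simp
    qed
    finally show ?thesis unfolding ell_def lin_coord ..
  qed
  have BQ: "BB Q x = \<kappa> * ell x" for x
    unfolding BB_def ell_eq by (subst Bq_sym) (simp add: Qk Bq_scale Bq_sym)
  have qQ0: "qq Q0L = 0" using qQ \<kappa>0 unfolding Qk qq_def Q_lc by simp
  have ellQ: "ell Q = 0" unfolding ell_eq BB_def by (simp add: Qk Bq_scale Bq_self qQ0[unfolded qq_def])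
  have ellw: "ell w = 0" using BQw \<kappa>0 unfolding BQ by simp
  show False
  proof (cases "\<forall>x\<in>TP. ell x = 0")
    case True
    have "lin_eval dQ x = 0" if "x \<in> TP" for x
      using expQ[OF that] True that unfolding gQ BQ by simp
    hence UQ: "lin_eval dQ (lift_vec U) = 0" "lin_eval dQ (lift_vec W) = 0"
      using lTP UW(2) span2_u span2_w by blast+
    have "lift_vec U' \<in> l'" "lift_vec W' \<in> l'" using UW'(2) span2_u span2_w by blast+
    hence "lin_eval dQ (lift_vec U') = 0" "lin_eval dQ (lift_vec W') = 0"
      using LOS[OF assms(5) Ql'] unfolding gQ[symmetric] C_def by blast+
    from meet[OF dk' UW(1) UW'(1) UQ this] show False using skew UW(2) UW'(2) by simp
  next
    case False
    then obtain x0 where x0: "x0 \<in> TP" "ell x0 \<noteq> 0" by blast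
    define f where "f = (\<lambda>j m. dK k * unitv j m - dK j * unitv k m)"
    have liftf: "lift_vec (f j) = (\<lambda>m. dL k * unitv j m - dL j * unitv k m)" for j
      unfolding f_def dL_def by (simp add: fun_eq_iff unitv_def)
    have "(\<Sum>j\<in>UNIV. x0 j * ell (lift_vec (f j))) = dL k * ell x0"
      unfolding ell_def liftf by (rule pivot_decomp) (use x0(1) TP_eq in blast)
    hence "\<exists>j. ell (lift_vec (f j)) \<noteq> 0" using dk x0(2) by (metis (no_types, lifting) mult_eq_0_iff mult_zero_right sum.neutral)
    then obtain j where j: "ell (lift_vec (f j)) \<noteq> 0" by blast
    define z where "z = f j"
    define Z where "Z = lift_vec z"
    have ZTP: "Z \<in> TP" unfolding TP_eq Z_def z_def liftf by (simp add: unit_sum)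
    have ellZ: "ell Z \<noteq> 0" using j unfolding Z_def z_def .
    have ellZK: "ell Z = to_ac (lin_eval lK z)" unfolding ell_def lL_def Z_def by (rule lin_lift)
    define rK where "rK = (\<lambda>i. (Bq q z (unitv i) - lK i * form_eval 2 q z / lin_eval lK z) / lin_eval lK z)"
    have "\<forall>x\<in>TP. form_eval 2 (lift_coeffs q) x = lin_eval (lift_vec lK) x * lin_eval (lift_vec rK) x"
    proof
      fix x assume xTP: "x \<in> TP"
      define lam where "lam = ell x / ell Z"
      define m where "m = lc 1 x (-lam) Z"
      have mTP: "lin_eval dL m = 0" using xTP ZTP unfolding m_def TP_eq lin_lc by simp
      have ellm: "ell m = 0" unfolding m_def ell_def lin_lc using ellZ unfolding lam_def ell_def by simp
      obtain b0 b1 b2 b3 where nzb: "b0 \<noteq> 0 \<or> b1 \<noteq> 0 \<or> b2 \<noteq> 0 \<or> b3 \<noteq> 0"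
        and depb: "\<forall>i. b0 * Q i + b1 * w i + b2 * m i + b3 * Z i = 0"
        using four_dep[of dL k Q w m Z] dk QTP wTP mTP ZTP unfolding TP_eq by blast
      have "ell (\<lambda>i. b0 * Q i + b1 * w i + b2 * m i + b3 * Z i) = 0" using depb unfolding ell_def lin_eval_def by simp
      hence "b3 * ell Z = 0" unfolding ell_def lin_comb4 using ellQ ellw ellm unfolding ell_def by simp
      hence b3: "b3 = 0" using ellZ by simp
      have b2: "b2 \<noteq> 0"
      proof
        assume "b2 = 0"
        hence "\<forall>i. b0 * Q i + b1 * w i = 0" using depb b3 by simp
        hence "b0 = 0 \<and> b1 = 0" using indw unfolding lin_indep2_def by blast
        thus False using nzb b3 \<open>b2 = 0\<close> by simp
      qed
      have "m = lc (-b0/b2) Q (-b1/b2) w" unfolding lc_def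
      proof
        fix i
        have "b0 * Q i + b1 * w i + b2 * m i = 0" using depb b3 by (metis add.right_neutral mult_zero_left)
        hence e: "b2 * m i = -(b0 * Q i + b1 * w i)" by (metis neg_eq_iff_add_eq_0)
        have "m i = (b2 * m i) / b2" using b2 by simp
        also have "\<dots> = -b0/b2 * Q i + -b1/b2 * w i" unfolding e by (simp add: divide_simps)
        finally show "m i = -b0/b2 * Q i + -b1/b2 * w i" .
      qed
      hence qm: "qq m = 0" using qspan by simp
      have xe: "x = lc lam Z 1 m" unfolding m_def lc_def by (simp add: fun_eq_iff)
      have "qq x = lam^2 * qq Z + lam * BB Z m + qq m"
        unfolding qq_def BB_def by (subst xe) (simp add: Q_lc)
      also have "BB Z m = BB Z x - lam * (2 * qq Z)"
        unfolding m_def BB_def qq_def by (simp add: Bq_lc Bq_self)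
      finally have qx: "qq x = lam * BB Z x - lam^2 * qq Z" using qm by (simp add: algebra_simps power2_eq_square)
      have rK_lift: "to_ac (rK i) = (BB Z (unitv i) - lL i * qq Z / ell Z) / ell Z" for i
      proof -
        have "BB Z (unitv i) = to_ac (Bq q z (unitv i))"
          unfolding BB_def Z_def CQ_def by (subst unitv_lift[symmetric]) (rule Bq_lift)
        moreover have "qq Z = to_ac (form_eval 2 q z)" unfolding qq_def CQ_def Z_def by (rule fe_lift)
        ultimately show ?thesis unfolding rK_def ellZK lL_def by simp
      qed
      have "lin_eval (lift_vec rK) x = (\<Sum>i\<in>UNIV. x i * ((BB Z (unitv i) - lL i * qq Z / ell Z) / ell Z))"
        unfolding lin_coord rK_lift ..
      also have "\<dots> = ((\<Sum>i\<in>UNIV. x i * BB Z (unitv i)) - (\<Sum>i\<in>UNIV. x i * lL i) * qq Z / ell Z) / ell Z"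
        unfolding sum4 using ellZ by (simp add: field_simps)
      also have "\<dots> = (BB Z x - ell x * qq Z / ell Z) / ell Z"
        unfolding BB_def ell_def lin_coord Bq_coord[symmetric] ..
      finally have rx: "lin_eval (lift_vec rK) x = (BB Z x - ell x * qq Z / ell Z) / ell Z" .
      show "form_eval 2 (lift_coeffs q) x = lin_eval (lift_vec lK) x * lin_eval (lift_vec rK) x"
        using qx unfolding rx qq_def[symmetric] CQ_def[symmetric] lL_def[symmetric] ell_def[symmetric] lam_def
        using ellZ by (simp add: field_simps power2_eq_square)
    qed
    thus False using G4 by blast
  qed
qed


end
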